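(* Let $G$ be a graph and $\phi\colon E(G)\to\{\mathrm{red},\mathrm{blue}\}$ a $2$-edge coloring. Let $C$ be an alternating cycle in $\phi$, and let $\phi'$ be obtained from $\phi$ by inverting $C$. Then for each $\gamma\in\{\mathrm{red},\mathrm{blue}\}$, the set of conflicting edges of $G_{\gamma,\phi'}$ is a subset of the set of conflicting edges of $G_{\gamma,\phi}$.
   Context: All graphs are finite and simple. For a coloring $\phi$ and color $\gamma$, $G_{\gamma,\phi}=(V(G),\phi^{-1}(\gamma))$ is the spanning subgraph of edges of color $\gamma$. An edge $uv$ of a graph $H$ is conflicting in $H$ if $d_H(u)=d_H(v)$. An even cycle $C=(u_1,\ldots,u_k,u_{k+1}=u_1)$ of $G$ is an alternating cycle in $\phi$ if $\phi(u_iu_{i+1})\ne\phi(u_{i+1}u_{i+2})$ for all $1\le i<k$, and for every $1\le i\le k$, letting $\bar\gamma$ be the color different from $\phi(u_iu_{i+1})$, one has $d_{G_{\bar\gamma,\phi}}(u_i)\ne d_{G_{\bar\gamma,\phi}}(u_{i+1})$. The coloring obtained from $\phi$ by inverting $C$ is the coloring $\phi'$ with $\phi'(e)$ equal to the color other than $\phi(e)$ for $e\in E(C)$ and $\phi'(e)=\phi(e)$ otherwise. *)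

theory Defs
  imports Main
begin

datatype color = Red | Blue

fun other :: "color \<Rightarrow> color" where
  "other Red = Blue" | "other Blue = Red"

definition simple_graph :: "'a set \<Rightarrow> 'a set set \<Rightarrow> bool" where
  "simple_graph V E \<longleftrightarrow> finite V \<and> (\<forall>e\<in>E. \<exists>u v. e = {u, v} \<and> u \<noteq> v \<and> u \<in> V \<and> v \<in> V)"

text \<open>Edge set of the spanning subgraph G_{gamma,phi}.\<close>
definition color_edges :: "'a set set \<Rightarrow> ('a set \<Rightarrow> color) \<Rightarrow> color \<Rightarrow> 'a set set" where
  "color_edges E phi g = {e \<in> E. phi e = g}"

definition deg :: "'a set set \<Rightarrow> 'a \<Rightarrow> nat" where
  "deg F v = card {e \<in> F. v \<in> e}"

definition conflicting_edges :: "'a set set \<Rightarrow> 'a set set" where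
  "conflicting_edges F = {e \<in> F. \<exists>u v. e = {u, v} \<and> deg F u = deg F v}"

text \<open>A cycle (u_1,...,u_k,u_1) represented by the list [u_1,...,u_k], indices mod k.\<close>
definition cyc_vert :: "'a list \<Rightarrow> nat \<Rightarrow> 'a" where
  "cyc_vert us i = us ! (i mod length us)"

definition cyc_edge :: "'a list \<Rightarrow> nat \<Rightarrow> 'a set" where
  "cyc_edge us i = {cyc_vert us i, cyc_vert us (Suc i)}"

definition cycle_edges :: "'a list \<Rightarrow> 'a set set" where
  "cycle_edges us = {cyc_edge us i | i. i < length us}"

definition is_cycle :: "'a set set \<Rightarrow> 'a list \<Rightarrow> bool" where
  "is_cycle E us \<longleftrightarrow> length us \<ge> 3 \<and> distinct us \<and> (\<forall>i < length us. cyc_edge us i \<in> E)"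

definition even_cycle :: "'a set set \<Rightarrow> 'a list \<Rightarrow> bool" where
  "even_cycle E us \<longleftrightarrow> is_cycle E us \<and> even (length us)"

text \<open>Alternating cycle; list index i (0-based) corresponds to u_{i+1}.\<close>
definition alternating_cycle :: "'a set set \<Rightarrow> ('a set \<Rightarrow> color) \<Rightarrow> 'a list \<Rightarrow> bool" where
  "alternating_cycle E phi us \<longleftrightarrow> even_cycle E us
     \<and> (\<forall>i. i + 1 < length us \<longrightarrow> phi (cyc_edge us i) \<noteq> phi (cyc_edge us (Suc i)))
     \<and> (\<forall>i < length us.
          deg (color_edges E phi (other (phi (cyc_edge us i)))) (cyc_vert us i)
          \<noteq> deg (color_edges E phi (other (phi (cyc_edge us i)))) (cyc_vert us (Suc i)))"

definition invert_cycle :: "('a set \<Rightarrow> color) \<Rightarrow> 'a list \<Rightarrow> ('a set \<Rightarrow> color)" where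
  "invert_cycle phi us = (\<lambda>e. if e \<in> cycle_edges us then other (phi e) else phi e)"

end

theory Submission
  imports Defs
begin

lemma other_other[simp]: "other (other c) = c" by (cases c) auto
lemma other_neq[simp]: "other c \<noteq> c" by (cases c) auto
lemma other_neq2[simp]: "c \<noteq> other c" by (cases c) auto
lemma neq_other: "a \<noteq> b \<Longrightarrow> b = other a" by (cases a; cases b) auto

lemma alt_parity:
  assumes "alternating_cycle E phi us"
  shows "i < length us \<Longrightarrow> phi (cyc_edge us i) = (if even i then phi (cyc_edge us 0) else other (phi (cyc_edge us 0)))"
proof (induction i)
  case 0 then show ?case by simp
next
  case (Suc i)
  have "phi (cyc_edge us i) \<noteq> phi (cyc_edge us (Suc i))"
    using assms Suc.prems unfolding alternating_cycle_def by auto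
  then show ?case using Suc by (auto dest: neq_other)
qed

lemma deg_pres:
  assumes fin: "finite E" and alt: "alternating_cycle E phi us"
  shows "deg (color_edges E (invert_cycle phi us) g) v = deg (color_edges E phi g) v"
proof -
  let ?k = "length us"
  have cyc: "is_cycle E us" "even ?k" using alt unfolding alternating_cycle_def even_cycle_def by auto
  hence k3: "?k \<ge> 3" and dist: "distinct us" and inE: "\<forall>i<?k. cyc_edge us i \<in> E"
    unfolding is_cycle_def by auto
  have kpos: "0 < ?k" using k3 by linarith
  let ?A = "{e \<in> color_edges E (invert_cycle phi us) g. v \<in> e}"
  let ?B = "{e \<in> color_edges E phi g. v \<in> e}"
  show ?thesis
  proof (cases "v \<in> set us")
    case False
    have mm: "\<forall>n. us ! (n mod ?k) \<in> set us" using kpos by simp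
    have "\<forall>e\<in>cycle_edges us. v \<notin> e"
      using False mm unfolding cycle_edges_def cyc_edge_def cyc_vert_def by auto
    hence "?A = ?B" unfolding color_edges_def invert_cycle_def by auto
    thus ?thesis unfolding deg_def by simp
  next
    case True
    then obtain j where j: "j < ?k" "us ! j = v" by (auto simp: in_set_conv_nth)
    define p where "p = (j + ?k - 1) mod ?k"
    have p: "p < ?k" using kpos by (simp add: p_def)
    have sp: "Suc p mod ?k = j"
      using j k3 unfolding p_def by (metis Suc_diff_1 add_gr_0 mod_Suc_eq mod_add_self2 mod_less zero_less_iff_neq_zero)
    have e1v: "v \<in> cyc_edge us j" using j unfolding cyc_edge_def cyc_vert_def by simp
    have e0v: "v \<in> cyc_edge us p" using j sp unfolding cyc_edge_def cyc_vert_def by simp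
    have e1c: "cyc_edge us j \<in> cycle_edges us" using j unfolding cycle_edges_def by auto
    have e0c: "cyc_edge us p \<in> cycle_edges us" using p unfolding cycle_edges_def by auto
    have only: "e = cyc_edge us j \<or> e = cyc_edge us p" if "e \<in> cycle_edges us" "v \<in> e" for e
    proof -
      have "\<exists>i. i < ?k \<and> e = cyc_edge us i" using that(1) unfolding cycle_edges_def by auto
      then obtain i where i: "i < ?k" "e = cyc_edge us i" by blast
      have "us ! (i mod ?k) = us ! j \<or> us ! (Suc i mod ?k) = us ! j"
      proof -
        have "v \<in> {us ! (i mod ?k), us ! (Suc i mod ?k)}"
          using that(2) unfolding i(2) cyc_edge_def cyc_vert_def .
        thus ?thesis using j(2) by (metis insertE singletonD)
      qed
      hence "i mod ?k = j \<or> Suc i mod ?k = j"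
        using nth_eq_iff_index_eq[OF dist, of "i mod ?k" j] nth_eq_iff_index_eq[OF dist, of "Suc i mod ?k" j]
          kpos j(1) mod_less_divisor by metis
      moreover have "Suc i mod ?k = j \<Longrightarrow> i = p"
      proof -
        assume h: "Suc i mod ?k = j"
        show "i = p"
        proof (cases "Suc i = ?k")
          case True thus ?thesis using h k3 unfolding p_def by simp
        next
          case False
          hence "Suc i < ?k" using i(1) by linarith
          hence "Suc i = j" using h by simp
          hence "j + ?k - 1 = i + ?k" by simp
          thus ?thesis unfolding p_def using i(1) by simp
        qed
      qed
      ultimately show ?thesis using i by auto
    qed
    have diff: "phi (cyc_edge us j) \<noteq> phi (cyc_edge us p)"
    proof -
      have "even j \<noteq> even p"
      proof (cases "j = 0")
        case True thus ?thesis using cyc(2) k3 kpos unfolding p_def by simp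
      next
        case False
        hence "j + ?k - 1 = (j - 1) + ?k" by simp
        hence "p = (j - 1 + ?k) mod ?k" unfolding p_def by (simp only:)
        also have "\<dots> = j - 1" using j(1) by simp
        finally show ?thesis using False by (cases j) auto
      qed
      moreover note alt_parity[OF alt j(1)] alt_parity[OF alt p]
      ultimately show ?thesis by (cases "even j") auto
    qed
    have diffg: "phi (cyc_edge us p) = other (phi (cyc_edge us j))" using neq_other[OF diff] .
    have ejE: "cyc_edge us j \<in> E" using inE j(1) by blast
    have epE: "cyc_edge us p \<in> E" using inE p by blast
    obtain a b where ab: "(a = cyc_edge us j \<and> b = cyc_edge us p) \<or> (a = cyc_edge us p \<and> b = cyc_edge us j)"
       "phi a = g" "phi b = other g"
    proof (cases "phi (cyc_edge us j) = g")
      case True then show ?thesis using that[of "cyc_edge us j" "cyc_edge us p"] diffg by simp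
    next
      case False
      hence "phi (cyc_edge us j) = other g" using neq_other[OF False] by simp
      then show ?thesis using that[of "cyc_edge us p" "cyc_edge us j"] diffg by simp
    qed
    have aE: "a \<in> E" "b \<in> E" using ab(1) ejE epE by auto
    have ac: "a \<in> cycle_edges us" "b \<in> cycle_edges us" "v \<in> a" "v \<in> b"
      using ab(1) e0c e1c e0v e1v by auto
    have onl: "e \<in> cycle_edges us \<Longrightarrow> v \<in> e \<Longrightarrow> e = a \<or> e = b" for e
      using only[of e] ab(1) by auto
    have AB: "?A = insert b (?B - {a})"
    proof (intro set_eqI iffI)
      fix e assume eA: "e \<in> ?A"
      hence eE: "e \<in> E" "invert_cycle phi us e = g" "v \<in> e" unfolding color_edges_def by auto
      show "e \<in> insert b (?B - {a})"
      proof (cases "e \<in> cycle_edges us")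
        case True
        hence "other (phi e) = g" using eE(2) unfolding invert_cycle_def by simp
        hence "phi e \<noteq> g" by auto
        hence "e \<noteq> a" using ab(2) by auto
        hence "e = b" using onl[OF True eE(3)] by blast
        thus ?thesis by simp
      next
        case False
        hence "phi e = g" using eE(2) unfolding invert_cycle_def by simp
        moreover have "e \<noteq> a" using False ac(1) by auto
        ultimately show ?thesis using eE unfolding color_edges_def by simp
      qed
    next
      fix e assume eB: "e \<in> insert b (?B - {a})"
      show "e \<in> ?A"
      proof (cases "e = b")
        case True
        have "invert_cycle phi us b = g" using ac(2) ab(3) unfolding invert_cycle_def by simp
        thus ?thesis using True aE(2) ac(4) unfolding color_edges_def by simp
      next
        case False
        hence eE: "e \<in> E" "phi e = g" "v \<in> e" "e \<noteq> a" using eB unfolding color_edges_def by auto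
        have "e \<notin> cycle_edges us"
        proof
          assume "e \<in> cycle_edges us"
          hence "e = b" using onl eE(3) eE(4) by blast
          thus False using False by simp
        qed
        hence "invert_cycle phi us e = g" using eE(2) unfolding invert_cycle_def by simp
        thus ?thesis using eE unfolding color_edges_def by simp
      qed
    qed
    have finB: "finite ?B" by (rule finite_subset[OF _ fin]) (auto simp: color_edges_def)
    have aB: "a \<in> ?B" using aE(1) ab(2) ac(3) unfolding color_edges_def by simp
    have bB: "b \<notin> ?B - {a}" using ab(3) unfolding color_edges_def by simp
    have "card ?A = Suc (card (?B - {a}))" unfolding AB
      using card_insert_disjoint[OF finite_Diff[OF finB] bB] .
    also have "\<dots> = Suc (card ?B - 1)" using card_Diff_singleton[OF aB] by simp
    also have "\<dots> = card ?B" using card_gt_0_iff[of ?B] finB aB by auto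
    finally have "card ?A = card ?B" .
    thus ?thesis unfolding deg_def .
  qed
qed

theorem lemma2p6:
  fixes V :: "'a set" and E :: "'a set set" and phi :: "'a set \<Rightarrow> color" and us :: "'a list"
  assumes "simple_graph V E"
    and "alternating_cycle E phi us"
  shows "\<forall>g. conflicting_edges (color_edges E (invert_cycle phi us) g)
             \<subseteq> conflicting_edges (color_edges E phi g)"
proof (intro allI subsetI)
  fix g e
  have finE: "finite E"
  proof -
    have sg: "finite V" "\<forall>e\<in>E. \<exists>u v. e = {u, v} \<and> u \<noteq> v \<and> u \<in> V \<and> v \<in> V"
      using assms(1) unfolding simple_graph_def by simp_all
    have "E \<subseteq> Pow V"
    proof
      fix e assume "e \<in> E"
      then obtain u v where "e = {u, v}" "u \<in> V" "v \<in> V" using sg(2) by metis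
      thus "e \<in> Pow V" by simp
    qed
    thus ?thesis using sg(1) finite_Pow_iff finite_subset by metis
  qed
  note dp = deg_pres[OF finE assms(2)]
  assume "e \<in> conflicting_edges (color_edges E (invert_cycle phi us) g)"
  then obtain u v where e0: "e \<in> color_edges E (invert_cycle phi us) g" "e = {u, v}"
    and d0: "deg (color_edges E (invert_cycle phi us) g) u = deg (color_edges E (invert_cycle phi us) g) v"
    unfolding conflicting_edges_def by blast
  have d: "deg (color_edges E phi g) u = deg (color_edges E phi g) v"
    using d0 by (simp only: dp)
  have e: "e \<in> E" "invert_cycle phi us e = g" "e = {u, v}"
    using e0 unfolding color_edges_def by auto
  show "e \<in> conflicting_edges (color_edges E phi g)"
  proof (cases "e \<in> cycle_edges us")
    case False
    hence "phi e = g" using e(2) unfolding invert_cycle_def by simp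
    hence "e \<in> color_edges E phi g" using e(1) unfolding color_edges_def by simp
    thus ?thesis using e(3) d unfolding conflicting_edges_def by blast
  next
    case True
    then obtain i where i: "i < length us" "e = cyc_edge us i" unfolding cycle_edges_def by blast
    have "other (phi e) = g" using e True unfolding invert_cycle_def by simp
    moreover have "\<forall>i < length us.
          deg (color_edges E phi (other (phi (cyc_edge us i)))) (cyc_vert us i)
          \<noteq> deg (color_edges E phi (other (phi (cyc_edge us i)))) (cyc_vert us (Suc i))"
      using assms(2) unfolding alternating_cycle_def by blast
    ultimately have "deg (color_edges E phi g) (cyc_vert us i) \<noteq> deg (color_edges E phi g) (cyc_vert us (Suc i))"
      using i by metis
    moreover have "{u, v} = {cyc_vert us i, cyc_vert us (Suc i)}" using e i unfolding cyc_edge_def by simp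
    ultimately have False using d by (auto simp: doubleton_eq_iff)
    thus ?thesis ..
  qed
qed

end
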